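(* Let $\bar c$, $\Delta$ be as below and let $\bar\xi$ be a type (2) vertex of $\Delta$, with $c=2\bar c-d$ and $\xi=2\bar\xi-d$ collinear with an edge $vw$ of $\operatorname{conv}(\mathcal W)$ having no points of $\mathcal W$ in its interior, and suppose $c=2v-w$. Then either $w$ is of type I, or $w$ is of type III and $v_i=-1$, $w_i=-2$ for some index $i$.
   Context: Setting: $G$ compact Lie group, $K\subset G$ closed, $G/K$ connected almost effective, isotropy representation $\mathfrak p=\mathfrak p_1\oplus\cdots\oplus\mathfrak p_r$ ($r\ge2$) with pairwise inequivalent $\mathbb R$-irreducible summands, $d_i=\dim\mathfrak p_i$, $d=(d_1,\dots,d_r)$, $n=\sum d_i$. The scalar curvature of the metric $e^{q_i}Q$ on $\mathfrak p_i$ is $S(q)=\sum_{w\in\mathcal W}A_we^{w\cdot q}$, $\mathcal W\subset\mathbb Z^r$ finite, $A_w\ne0$, each $w$ of type I (one entry $-1$), type II (one entry $1$, two entries $-1$) or type III (one entry $1$, one entry $-2$), other entries $0$; $A_w>0$ for type I and $<0$ otherwise. Assume $\dim\operatorname{conv}(\mathcal W)=r-1$. $J$ is the symmetric bilinear form with $J(p,p)=\frac1{n-1}(\sum p_i)^2-\sum p_i^2/d_i$; null means $J(\bar x,\bar x)=0$. $u=\sum_{\bar c\in\mathcal C}F_{\bar c}e^{\bar c\cdot q}$ ($\mathcal C$ finite, $F_{\bar c}\ne0$) is a superpotential: for every $\xi$, $\sum_{(\bar a,\bar c)\in\mathcal C^2,\ \bar a+\bar c=\xi}J(\bar a,\bar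 c)F_{\bar a}F_{\bar c}$ equals $A_w$ if $\xi=d+w$, $w\in\mathcal W$, and $0$ otherwise; $\mathcal C$ lies in $\mathcal H=\{\sum\bar x_i=\frac12(n-1)\}$. For $x$ with $\sum x_i=-1$ write $\bar x=\frac12(d+x)$. $\bar c$ is a null vertex of $\operatorname{conv}(\mathcal C)$ (lying outside $\operatorname{conv}(\frac12(d+\mathcal W))$); $H'\subset\mathcal H$ is an affine hyperplane strictly separating $\bar c$ from $\operatorname{conv}(\frac12(d+\mathcal W))$, and $\Delta$ is the image of $\operatorname{conv}(\frac12(d+\mathcal W))$ under $\bar z\mapsto$ (intersection of the ray from $\bar c$ through $\bar z$ with $H'$). A vertex $\bar\xi$ of $\Delta$ is of type (2) if $J(\bar c,\bar\xi)\ne0$ and $\bar c,\bar\xi$ are collinear with an edge of $\operatorname{conv}(\frac12(d+\mathcal W))$. *)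

theory Defs
  imports "HOL-Analysis.Analysis"
begin

(* Vectors in R^r are modelled as real^'n, with r = CARD('n). *)

definition type_I :: "real^'n \<Rightarrow> bool" where
  "type_I w \<longleftrightarrow> (\<exists>i. w$i = -1 \<and> (\<forall>j. j \<noteq> i \<longrightarrow> w$j = 0))"

definition type_II :: "real^'n \<Rightarrow> bool" where
  "type_II w \<longleftrightarrow> (\<exists>i j k. i \<noteq> j \<and> i \<noteq> k \<and> j \<noteq> k \<and>
      w$i = 1 \<and> w$j = -1 \<and> w$k = -1 \<and>
      (\<forall>l. l \<noteq> i \<and> l \<noteq> j \<and> l \<noteq> k \<longrightarrow> w$l = 0))"

definition type_III :: "real^'n \<Rightarrow> bool" where
  "type_III w \<longleftrightarrow> (\<exists>i j. i \<noteq> j \<and> w$i = 1 \<and> w$j = -2 \<and>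
      (\<forall>l. l \<noteq> i \<and> l \<noteq> j \<longrightarrow> w$l = 0))"

definition vsum :: "real^'n \<Rightarrow> real" where
  "vsum x = (\<Sum>i\<in>UNIV. x$i)"

(* the bilinear form J (depends on d); n = sum of the d_i *)
definition Jform :: "real^'n \<Rightarrow> real^'n \<Rightarrow> real^'n \<Rightarrow> real" where
  "Jform d p q = (vsum p * vsum q) / (vsum d - 1) - (\<Sum>i\<in>UNIV. p$i * q$i / d$i)"

definition Hplane :: "real^'n \<Rightarrow> (real^'n) set" where
  "Hplane d = {x. vsum x = (vsum d - 1) / 2}"

(* the superpotential equation for u = sum_{c in C} F_c e^{c.q} w.r.t. S = sum_{w in W} A_w e^{w.q} *)
definition superpotential ::
  "real^'n \<Rightarrow> (real^'n) set \<Rightarrow> (real^'n \<Rightarrow> real) \<Rightarrow> (real^'n) set \<Rightarrow> (real^'n \<Rightarrow> real) \<Rightarrow> bool" where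
  "superpotential d W A C F \<longleftrightarrow>
     finite C \<and> (\<forall>c\<in>C. F c \<noteq> 0) \<and> C \<subseteq> Hplane d \<and>
     (\<forall>\<xi>. (\<Sum>(a, c) \<in> {(a, c) \<in> C \<times> C. a + c = \<xi>}. Jform d a c * F a * F c)
            = (if \<xi> - d \<in> W then A (\<xi> - d) else 0))"

end

theory Submission
  imports Defs
begin


definition Nf :: "real^'n \<Rightarrow> real^'n \<Rightarrow> real^'n \<Rightarrow> real" where
  "Nf d p q = (\<Sum>i\<in>UNIV. p$i * q$i / d$i)"

lemma vsum_add[simp]: "vsum (x + y) = vsum x + vsum y"
  by (simp add: vsum_def sum.distrib)
lemma vsum_diff[simp]: "vsum (x - y) = vsum x - vsum y"
  by (simp add: vsum_def sum_subtractf)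
lemma vsum_scale[simp]: "vsum (c *\<^sub>R x) = c * vsum x"
  by (simp add: vsum_def sum_distrib_left)

lemma Nf_add_left: "Nf d (x + y) z = Nf d x z + Nf d y z"
  by (simp add: Nf_def sum.distrib[symmetric] algebra_simps add_divide_distrib)
lemma Nf_diff_left: "Nf d (x - y) z = Nf d x z - Nf d y z"
  by (simp add: Nf_def sum_subtractf[symmetric] algebra_simps diff_divide_distrib)
lemma Nf_scale_left: "Nf d (c *\<^sub>R x) z = c * Nf d x z"
  by (simp add: Nf_def sum_distrib_left algebra_simps)
lemma Nf_sym: "Nf d x y = Nf d y x"
  by (simp add: Nf_def mult.commute)
lemma Nf_add_right: "Nf d z (x + y) = Nf d z x + Nf d z y"
  by (metis Nf_sym Nf_add_left)
lemma Nf_diff_right: "Nf d z (x - y) = Nf d z x - Nf d z y"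
  by (metis Nf_sym Nf_diff_left)
lemma Nf_scale_right: "Nf d z (c *\<^sub>R x) = c * Nf d z x"
  by (metis Nf_sym Nf_scale_left)

lemma Nf_pos:
  assumes "\<forall>i. d$i > 0" "z \<noteq> 0"
  shows "Nf d z z > 0"
proof -
  obtain i where i: "z$i \<noteq> 0" using assms(2) by (metis vec_eq_iff zero_index)
  have "Nf d z z \<ge> z$i * z$i / d$i"
    unfolding Nf_def
    by (rule member_le_sum) (use assms(1) in \<open>auto intro!: divide_nonneg_pos\<close>)
  moreover have "z$i * z$i / d$i > 0" using i assms(1) by (intro divide_pos_pos) (auto simp: zero_less_mult_iff)
  ultimately show ?thesis by linarith
qed

lemma Jform_Nf: "Jform d p q = (vsum p * vsum q) / (vsum d - 1) - Nf d p q"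
  by (simp add: Jform_def Nf_def)
lemma Jform_add_left: "Jform d (x + y) z = Jform d x z + Jform d y z"
  by (simp add: Jform_Nf Nf_add_left algebra_simps add_divide_distrib)
lemma Jform_scale_left: "Jform d (c *\<^sub>R x) z = c * Jform d x z"
  by (simp add: Jform_Nf Nf_scale_left algebra_simps)
lemma Jform_sym: "Jform d x y = Jform d y x"
  by (simp add: Jform_Nf Nf_sym[of d x y] mult.commute)
lemma Jform_add_right: "Jform d z (x + y) = Jform d z x + Jform d z y"
  by (metis Jform_sym Jform_add_left)
lemma Jform_scale_right: "Jform d z (c *\<^sub>R x) = c * Jform d z x"
  by (metis Jform_sym Jform_scale_left)

lemma Jform_H:
  assumes "vsum p = (vsum d - 1)/2" "vsum q = (vsum d - 1)/2" "vsum d \<noteq> 1"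
  shows "Jform d p q = (vsum d - 1)/4 - Nf d p q"
proof -
  have "vsum d - 1 \<noteq> 0" using assms(3) by simp
  then have "vsum p * vsum q / (vsum d - 1) = (vsum d - 1)/4"
  proof -
    have "vsum p * vsum q = (vsum d - 1) * (vsum d - 1) / 4" unfolding assms(1,2) by simp
    then show ?thesis using \<open>vsum d - 1 \<noteq> 0\<close> by simp
  qed
  then show ?thesis by (simp add: Jform_Nf)
qed



lemma fin_argmax:
  fixes f :: "'a \<Rightarrow> real"
  assumes "finite S" "S \<noteq> {}"
  obtains x where "x \<in> S" "\<forall>y\<in>S. f y \<le> f x"
proof -
  have "Max (f ` S) \<in> f ` S" using assms by simp
  then obtain x where "x \<in> S" "f x = Max (f ` S)" by auto
  moreover have "\<forall>y\<in>S. f y \<le> Max (f ` S)" using assms by simp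
  ultimately show ?thesis using that by auto
qed

lemma fin_argmin:
  fixes f :: "'a \<Rightarrow> real"
  assumes "finite S" "S \<noteq> {}"
  obtains x where "x \<in> S" "\<forall>y\<in>S. f x \<le> f y"
proof -
  obtain x where "x \<in> S" "\<forall>y\<in>S. - f y \<le> - f x" using fin_argmax[OF assms, of "\<lambda>x. - f x"] by blast
  then show ?thesis using that by auto
qed

lemma Nf_par: "Nf d (x - y) (x - y) = 2*Nf d x x + 2*Nf d y y - Nf d (x+y) (x+y)"
  by (simp add: Nf_add_left Nf_add_right Nf_diff_left Nf_diff_right Nf_sym[of d y x])

lemma pair_sum2:
  assumes "p \<noteq> q"
  shows "(\<Sum>(x,y)\<in>{(p,q),(q,p)}. g x y) = g p q + (g q p :: real)"
  using assms by simp

lemma ZC: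
  fixes C G :: "(real^'n) set" and F :: "real^'n \<Rightarrow> real"
  assumes dpos: "\<forall>i. d$i > 0" and dn: "vsum d \<noteq> 1"
    and fin: "finite C" and H: "\<forall>x\<in>C. vsum x = (vsum d - 1)/2"
    and Fnz: "\<forall>x\<in>C. F x \<noteq> 0"
    and GC: "G \<subseteq> C"
    and clo: "\<And>a b a' b'. a\<in>G \<Longrightarrow> b\<in>G \<Longrightarrow> a'\<in>C \<Longrightarrow> b'\<in>C \<Longrightarrow> a'+b' = a+b \<Longrightarrow> a'\<in>G \<and> b'\<in>G"
    and zero: "\<And>a b. a\<in>G \<Longrightarrow> b\<in>G \<Longrightarrow> (\<Sum>(x,y)\<in>{(x,y)\<in>C\<times>C. x+y=a+b}. Jform d x y * F x * F y) = 0"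
    and p: "p\<in>G" and q: "q\<in>G"
  shows "p = q"
proof (rule ccontr)
  assume pq: "p \<noteq> q"
  have finG: "finite G" using fin GC finite_subset by blast
  have K: "\<And>x y. x\<in>C \<Longrightarrow> y\<in>C \<Longrightarrow> Jform d x y = (vsum d - 1)/4 - Nf d x y"
    using Jform_H H dn by blast
  obtain p0 where p0G: "p0 \<in> G" and p0max: "\<forall>x\<in>G. Nf d x x \<le> Nf d p0 p0"
    using fin_argmax[OF finG, of "\<lambda>x. Nf d x x"] p by blast
  have S1: "{(x,y)\<in>C\<times>C. x+y=p0+p0} = {(p0,p0)}"
  proof (intro equalityI subsetI)
    fix z assume z: "z \<in> {(x,y)\<in>C\<times>C. x+y=p0+p0}"
    then obtain x y where zxy: "z = (x,y)" "x\<in>C" "y\<in>C" "x+y = p0+p0" by auto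
    then have xy: "x\<in>G" "y\<in>G" using clo[OF p0G p0G] by blast+
    have "Nf d (x - y) (x - y) = 2*Nf d x x + 2*Nf d y y - Nf d (p0+p0) (p0+p0)"
      using Nf_par zxy(4) by metis
    also have "Nf d (p0+p0) (p0+p0) = 4 * Nf d p0 p0"
      by (simp only: Nf_add_left Nf_add_right)
    finally have e: "Nf d (x - y) (x - y) = 2*Nf d x x + 2*Nf d y y - 4 * Nf d p0 p0" .
    have "Nf d x x \<le> Nf d p0 p0" "Nf d y y \<le> Nf d p0 p0" using p0max xy by auto
    then have "Nf d (x - y) (x - y) \<le> 0" using e by linarith
    then have "x = y" using Nf_pos[OF dpos, of "x - y"] by force
    then have "x = p0" using zxy(4) by (metis add_right_imp_eq scaleR_2 scaleR_cancel_left zero_neq_numeral)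
    then show "z \<in> {(p0,p0)}" using zxy \<open>x = y\<close> by simp
  next
    fix z assume "z \<in> {(p0,p0)}"
    then show "z \<in> {(x,y)\<in>C\<times>C. x+y=p0+p0}" using p0G GC by auto
  qed
  have "Jform d p0 p0 * F p0 * F p0 = 0" using zero[OF p0G p0G] unfolding S1 by simp
  then have J0: "Jform d p0 p0 = 0" using Fnz p0G GC by auto
  then have Kp: "(vsum d - 1)/4 = Nf d p0 p0" using K p0G GC by auto
  have ne: "G - {p0} \<noteq> {}" using p q pq by auto
  obtain q0 where q0G: "q0 \<in> G - {p0}" and q0max: "\<forall>x\<in>G - {p0}. Nf d p0 x \<le> Nf d p0 q0"
    using fin_argmax[OF _ ne, of "\<lambda>x. Nf d p0 x"] finG by blast
  have "p0 - q0 \<noteq> 0" using q0G by auto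
  then have "Nf d (p0 - q0) (p0 - q0) > 0" using Nf_pos[OF dpos] by blast
  moreover have "Nf d (p0 - q0) (p0 - q0) = Nf d p0 p0 + Nf d q0 q0 - 2 * Nf d p0 q0"
    by (simp add: Nf_diff_left Nf_diff_right Nf_sym[of d q0 p0])
  moreover have "Nf d q0 q0 \<le> Nf d p0 p0" using p0max q0G by auto
  ultimately have lt: "Nf d p0 q0 < Nf d p0 p0" by linarith
  have S2: "{(x,y)\<in>C\<times>C. x+y=p0+q0} = {(p0,q0),(q0,p0)}"
  proof (intro equalityI subsetI)
    fix z assume z: "z \<in> {(x,y)\<in>C\<times>C. x+y=p0+q0}"
    then obtain x y where zxy: "z = (x,y)" "x\<in>C" "y\<in>C" "x+y = p0+q0" by auto
    have q0G': "q0 \<in> G" using q0G by auto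
    then have xy: "x\<in>G" "y\<in>G" using clo[OF p0G q0G'] zxy by blast+
    show "z \<in> {(p0,q0),(q0,p0)}"
    proof (cases "x = p0 \<or> y = p0")
      case True
      then show ?thesis using zxy by (auto simp: add.commute)
    next
      case False
      then have "Nf d p0 x \<le> Nf d p0 q0" "Nf d p0 y \<le> Nf d p0 q0" using q0max xy by auto
      moreover have "Nf d p0 x + Nf d p0 y = Nf d p0 p0 + Nf d p0 q0"
        using zxy(4) by (metis Nf_add_right)
      ultimately show ?thesis using lt by linarith
    qed
  next
    fix z assume "z \<in> {(p0,q0),(q0,p0)}"
    then show "z \<in> {(x,y)\<in>C\<times>C. x+y=p0+q0}" using p0G q0G GC by (auto simp: add.commute)
  qed
  have pq0: "p0 \<noteq> q0" using q0G by auto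
  have "(\<Sum>(x,y)\<in>{(p0,q0),(q0,p0)}. Jform d x y * F x * F y) = 2 * (Jform d p0 q0 * F p0 * F q0)"
    using pq0 by (simp add: Jform_sym[of d q0 p0])
  moreover have "Jform d p0 q0 > 0"
  proof -
    have "p0 \<in> C" "q0 \<in> C" using p0G q0G GC by auto
    then have "Jform d p0 q0 = Nf d p0 p0 - Nf d p0 q0" using K[of p0 q0] Kp by simp
    then show ?thesis using lt by simp
  qed
  moreover have "F p0 \<noteq> 0" "F q0 \<noteq> 0" using Fnz p0G q0G GC by auto
  ultimately have "(\<Sum>(x,y)\<in>{(p0,q0),(q0,p0)}. Jform d x y * F x * F y) \<noteq> 0" by simp
  moreover have "(\<Sum>(x,y)\<in>{(x,y)\<in>C\<times>C. x+y=p0+q0}. Jform d x y * F x * F y) = 0"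
    using zero[OF p0G] q0G by auto
  ultimately show False unfolding S2 by simp
qed



lemma sweep:
  fixes C W :: "(real^'n) set" and F A :: "real^'n \<Rightarrow> real"
  assumes dpos: "\<forall>i. d$i > 0" and dn: "vsum d \<noteq> 1"
    and fin: "finite C" and H: "\<forall>x\<in>C. vsum x = (vsum d - 1)/2"
    and Fnz: "\<forall>x\<in>C. F x \<noteq> 0"
    and coef: "\<And>s. (\<Sum>(x,y)\<in>{(x,y)\<in>C\<times>C. x+y=s}. Jform d x y * F x * F y) = (if s - d \<in> W then A (s - d) else 0)"
    and cbC: "cb \<in> C"
    and l0: "\<And>x. x\<in>C \<Longrightarrow> x \<noteq> cb \<Longrightarrow> l0 \<bullet> cb < l0 \<bullet> x"
    and Wpos: "\<And>u. u\<in>W \<Longrightarrow> l0 \<bullet> cb < l0 \<bullet> ((1/2) *\<^sub>R (d + u))"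
    and muW: "\<And>u. u\<in>W \<Longrightarrow> l \<bullet> ((1/2) *\<^sub>R (d + u)) + k \<ge> 0"
    and mucb: "l \<bullet> cb + k = 0"
    and x: "x \<in> C"
  shows "l \<bullet> x + k \<ge> 0"
proof (rule ccontr)
  assume nx: "\<not> ?thesis"
  define Neg where "Neg = {x\<in>C. l \<bullet> x + k < 0}"
  define la where "la x = l0 \<bullet> x - l0 \<bullet> cb" for x
  define mu where "mu x = l \<bullet> x + k" for x
  define r where "r x = la x / (la x - mu x)" for x
  have laC: "\<And>x. x \<in> C \<Longrightarrow> la x \<ge> 0" using l0 unfolding la_def by force
  have finN: "finite Neg" using fin unfolding Neg_def by auto
  have neN: "Neg \<noteq> {}" using nx x unfolding Neg_def by auto
  obtain x1 where x1N: "x1 \<in> Neg" and x1min: "\<forall>y\<in>Neg. r x1 \<le> r y"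
    using fin_argmin[OF finN neN, of r] by blast
  define s0 where "s0 = r x1"
  have x1C: "x1 \<in> C" and mux1: "mu x1 < 0" using x1N unfolding Neg_def mu_def by auto
  have x1cb: "x1 \<noteq> cb" using mux1 mucb unfolding mu_def by auto
  have lax1: "la x1 > 0" using l0[OF x1C x1cb] unfolding la_def by simp
  have s0pos: "0 < s0" and s0lt: "s0 < 1"
    using lax1 mux1 unfolding s0_def r_def by (auto simp: field_simps)
  define nu where "nu x = (1 - s0) * la x + s0 * mu x" for x
  have nu_nonneg: "\<And>x. x \<in> C \<Longrightarrow> nu x \<ge> 0"
  proof -
    fix x assume xC: "x \<in> C"
    show "nu x \<ge> 0"
    proof (cases "mu x \<ge> 0")
      case True
      then show ?thesis using laC[OF xC] s0pos s0lt unfolding nu_def by simp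
    next
      case False
      then have xN: "x \<in> Neg" using xC unfolding Neg_def mu_def by auto
      have pos: "la x - mu x > 0" using False laC[OF xC] by simp
      have "s0 \<le> r x" using x1min xN unfolding s0_def by auto
      then have "s0 * (la x - mu x) \<le> la x" using pos unfolding r_def by (simp add: field_simps)
      then show ?thesis unfolding nu_def by (simp add: algebra_simps)
    qed
  qed
  have nux1: "nu x1 = 0"
  proof -
    have pos: "la x1 - mu x1 > 0" using lax1 mux1 by simp
    then have "s0 * (la x1 - mu x1) = la x1" unfolding s0_def r_def by simp
    then show ?thesis unfolding nu_def by (simp add: algebra_simps)
  qed
  have nucb: "nu cb = 0" unfolding nu_def la_def mu_def using mucb by simp
  have nuadd: "\<And>a b. nu a + nu b = (1 - s0) * (l0 \<bullet> (a + b) - 2 * (l0 \<bullet> cb)) + s0 * (l \<bullet> (a + b) + 2 * k)"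
    unfolding nu_def la_def mu_def by (simp add: inner_add_right field_simps)
  have nuhalf: "\<And>a b. nu ((1/2) *\<^sub>R (a + b)) = (nu a + nu b) / 2"
    unfolding nu_def la_def mu_def by (simp add: inner_add_right field_simps)
  define G where "G = {x\<in>C. nu x = 0}"
  have "cb = x1"
  proof (rule ZC[OF dpos dn fin H Fnz, of G])
    show "G \<subseteq> C" unfolding G_def by auto
    show "cb \<in> G" "x1 \<in> G" using cbC x1C nucb nux1 unfolding G_def by auto
  next
    fix a b a' b' assume a: "a \<in> G" and b: "b \<in> G" and a': "a' \<in> C" and b': "b' \<in> C" and e: "a' + b' = a + b"
    have "nu a' + nu b' = nu a + nu b" using nuadd e by metis
    also have "\<dots> = 0" using a b unfolding G_def by simp
    finally show "a' \<in> G \<and> b' \<in> G" using nu_nonneg[OF a'] nu_nonneg[OF b'] a' b' unfolding G_def by auto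
  next
    fix a b assume a: "a \<in> G" and b: "b \<in> G"
    have "a + b - d \<notin> W"
    proof
      assume u: "a + b - d \<in> W"
      have eq: "(1/2) *\<^sub>R (d + (a + b - d)) = (1/2) *\<^sub>R (a + b)" by simp
      have "nu ((1/2) *\<^sub>R (a + b)) = 0" using nuhalf[of a b] a b unfolding G_def by simp
      moreover have "nu ((1/2) *\<^sub>R (a + b)) > 0"
      proof -
        have "la ((1/2) *\<^sub>R (a + b)) > 0" using Wpos[OF u] unfolding eq la_def by simp
        moreover have "mu ((1/2) *\<^sub>R (a + b)) \<ge> 0" using muW[OF u] unfolding eq mu_def by simp
        ultimately show ?thesis using s0pos s0lt unfolding nu_def
          by (simp add: add_pos_nonneg)
      qed
      ultimately show False by simp
    qed
    then show "(\<Sum>(x,y)\<in>{(x,y)\<in>C\<times>C. x+y=a+b}. Jform d x y * F x * F y) = 0"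
      using coef[of "a+b"] by simp
  qed
  then show False using x1cb by simp
qed



lemma type_entries:
  assumes "type_I u \<or> type_II u \<or> type_III u"
  shows "u$i = -2 \<or> u$i = -1 \<or> u$i = 0 \<or> u$i = 1"
  using assms unfolding type_I_def type_II_def type_III_def
  by (metis (no_types, opaque_lifting))

lemma type_m2:
  assumes "type_I u \<or> type_II u \<or> type_III u" "u$i = -2"
  shows "type_III u"
  using assms unfolding type_I_def type_II_def type_III_def
  by (smt (verit))

lemma vsum_types:
  assumes "type_I u \<or> type_II u \<or> type_III u"
  shows "vsum u = -1"
  using assms
proof (elim disjE)
  assume "type_I u"
  then obtain i where i: "u$i = -1" "\<forall>j. j \<noteq> i \<longrightarrow> u$j = 0" unfolding type_I_def by blast
  have "vsum u = u$i + (\<Sum>l\<in>UNIV - {i}. u$l)" unfolding vsum_def by (simp add: sum.remove)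
  also have "(\<Sum>l\<in>UNIV - {i}. u$l) = 0" using i by (intro sum.neutral) auto
  finally show ?thesis using i by simp
next
  assume "type_II u"
  then obtain i j k where i: "i \<noteq> j" "i \<noteq> k" "j \<noteq> k" "u$i = 1" "u$j = -1" "u$k = -1"
      "\<forall>l. l \<noteq> i \<and> l \<noteq> j \<and> l \<noteq> k \<longrightarrow> u$l = 0" unfolding type_II_def by blast
  have "vsum u = u$i + (\<Sum>l\<in>UNIV - {i}. u$l)" unfolding vsum_def by (simp add: sum.remove)
  also have "(\<Sum>l\<in>UNIV - {i}. u$l) = u$j + (\<Sum>l\<in>UNIV - {i} - {j}. u$l)"
    using i by (intro sum.remove) auto
  also have "(\<Sum>l\<in>UNIV - {i} - {j}. u$l) = u$k + (\<Sum>l\<in>UNIV - {i} - {j} - {k}. u$l)"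
    using i by (intro sum.remove) auto
  also have "(\<Sum>l\<in>UNIV - {i} - {j} - {k}. u$l) = 0" using i by (intro sum.neutral) auto
  finally show ?thesis using i by simp
next
  assume "type_III u"
  then obtain i j where i: "i \<noteq> j" "u$i = 1" "u$j = -2"
      "\<forall>l. l \<noteq> i \<and> l \<noteq> j \<longrightarrow> u$l = 0" unfolding type_III_def by blast
  have "vsum u = u$i + (\<Sum>l\<in>UNIV - {i}. u$l)" unfolding vsum_def by (simp add: sum.remove)
  also have "(\<Sum>l\<in>UNIV - {i}. u$l) = u$j + (\<Sum>l\<in>UNIV - {i} - {j}. u$l)"
    using i by (intro sum.remove) auto
  also have "(\<Sum>l\<in>UNIV - {i} - {j}. u$l) = 0" using i by (intro sum.neutral) auto
  finally show ?thesis using i by simp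
qed

lemma term_sign:
  fixes a b :: real
  assumes "a = -2 \<or> a = -1 \<or> a = 0 \<or> a = 1" "b = -2 \<or> b = -1 \<or> b = 0 \<or> b = 1"
    "\<not> (a = -1 \<and> b = -2)"
  shows "a * (a - b) \<ge> 0"
  using assms by auto


theorem lemma3p13:
  fixes d :: "real^'n" and W :: "(real^'n) set" and A :: "real^'n \<Rightarrow> real"
    and C :: "(real^'n) set" and F :: "real^'n \<Rightarrow> real"
    and cb xib v w a :: "real^'n" and b :: real
  assumes r2: "CARD('n) \<ge> 2"
    and d_pos: "\<forall>i. d$i \<in> \<nat> \<and> d$i \<ge> 1"
    and W_fin: "finite W"
    and W_types: "\<forall>u\<in>W. type_I u \<or> type_II u \<or> type_III u"
    and A_nz: "\<forall>u\<in>W. A u \<noteq> 0"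
    and A_I: "\<forall>u\<in>W. type_I u \<longrightarrow> A u > 0"
    and A_other: "\<forall>u\<in>W. \<not> type_I u \<longrightarrow> A u < 0"
    and W_dim: "aff_dim (convex hull W) = int CARD('n) - 1"
    and superpot: "superpotential d W A C F"
    and cb_vertex: "cb extreme_point_of (convex hull C)"
    and cb_null: "Jform d cb cb = 0"
    and cb_out: "cb \<notin> convex hull ((\<lambda>u. (1/2) *\<^sub>R (d + u)) ` W)"
    and sep_c: "a \<bullet> cb < b"
    and sep_W: "\<forall>z\<in>convex hull ((\<lambda>u. (1/2) *\<^sub>R (d + u)) ` W). a \<bullet> z > b"
    and xib_vertex: "xib extreme_point_of
        {y. y \<in> Hplane d \<and> a \<bullet> y = b \<and>
            (\<exists>z\<in>convex hull ((\<lambda>u. (1/2) *\<^sub>R (d + u)) ` W).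
               \<exists>t\<ge>0. y = cb + t *\<^sub>R (z - cb))}"
    and xib_J: "Jform d cb xib \<noteq> 0"
    and xib_edge: "\<exists>E. E face_of convex hull ((\<lambda>u. (1/2) *\<^sub>R (d + u)) ` W) \<and>
                       aff_dim E = 1 \<and> collinear ({cb, xib} \<union> E)"
    and vW: "v \<in> W" and wW: "w \<in> W" and vw: "v \<noteq> w"
    and vw_edge: "convex hull {v, w} face_of convex hull W"
    and vw_empty: "W \<inter> open_segment v w = {}"
    and vw_coll: "collinear {2 *\<^sub>R cb - d, 2 *\<^sub>R xib - d, v, w}"
    and c_eq: "2 *\<^sub>R cb - d = 2 *\<^sub>R v - w"
  shows "type_I w \<or> (type_III w \<and> (\<exists>i. v$i = -1 \<and> w$i = -2))"
proof -
  have dpos: "\<forall>i. d$i > 0" using d_pos by (meson less_le_trans zero_less_one)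
  have "(\<Sum>i\<in>(UNIV::'n set). (1::real)) \<le> (\<Sum>i\<in>UNIV. d$i)"
    by (rule sum_mono) (use d_pos in auto)
  then have "vsum d \<ge> real CARD('n)" unfolding vsum_def by simp
  then have dn: "vsum d \<noteq> 1" using r2 by linarith
  have fin: "finite C" and Fnz: "\<forall>x\<in>C. F x \<noteq> 0" and CH: "C \<subseteq> Hplane d"
    and coef: "\<And>s. (\<Sum>(x,y)\<in>{(x,y)\<in>C\<times>C. x+y=s}. Jform d x y * F x * F y) = (if s - d \<in> W then A (s - d) else 0)"
    using superpot unfolding superpotential_def by auto
  have H: "\<forall>x\<in>C. vsum x = (vsum d - 1)/2" using CH unfolding Hplane_def by auto
  have cbC: "cb \<in> C" using extreme_point_of_convex_hull cb_vertex by blast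
  have cbnot: "cb \<notin> convex hull (C - {cb})"
  proof -
    have e: "cb extreme_point_of convex hull C \<longleftrightarrow> cb \<in> convex hull C \<and> convex (convex hull C - {cb})"
      by (rule extreme_point_of_stillconvex[OF convex_convex_hull])
    have "convex (convex hull C - {cb})"
      using e cb_vertex by blast
    moreover have "C - {cb} \<subseteq> convex hull C - {cb}" using hull_subset[of C convex] by blast
    ultimately have "convex hull (C - {cb}) \<subseteq> convex hull C - {cb}"
      by (intro hull_minimal)
    then show ?thesis by blast
  qed
  have "closed (convex hull (C - {cb}))"
    using fin by (simp add: compact_imp_closed compact_convex_hull finite_imp_compact)
  then obtain l0 b0 where l0a: "l0 \<bullet> cb < b0" and l0b: "\<forall>x\<in>convex hull (C - {cb}). l0 \<bullet> x > b0"
    using separating_hyperplane_closed_point[OF convex_convex_hull _ cbnot] by blast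
  have l0: "\<And>x. x\<in>C \<Longrightarrow> x \<noteq> cb \<Longrightarrow> l0 \<bullet> cb < l0 \<bullet> x"
  proof -
    fix x assume "x \<in> C" "x \<noteq> cb"
    then have "x \<in> convex hull (C - {cb})" by (simp add: hull_inc)
    then show "l0 \<bullet> cb < l0 \<bullet> x" using l0a l0b by force
  qed
  have Wb_hull: "\<And>u. u \<in> W \<Longrightarrow> (1/2) *\<^sub>R (d + u) \<noteq> cb"
  proof
    fix u assume u: "u \<in> W" and e: "(1/2) *\<^sub>R (d + u) = cb"
    have "(1/2) *\<^sub>R (d + u) \<in> convex hull ((\<lambda>u. (1/2) *\<^sub>R (d + u)) ` W)"
      using u by (simp add: hull_inc)
    then show False using cb_out e by simp
  qed
  have mid: "\<And>u. u\<in>W \<Longrightarrow> \<exists>a\<in>C. \<exists>b\<in>C. a + b = d + u"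
  proof (rule ccontr)
    fix u assume u: "u \<in> W" and n: "\<not> (\<exists>a\<in>C. \<exists>b\<in>C. a + b = d + u)"
    then have e: "{(x,y)\<in>C\<times>C. x+y=d+u} = {}" by auto
    have "(\<Sum>(x,y)\<in>{(x,y)\<in>C\<times>C. x+y=d+u}. Jform d x y * F x * F y) = 0" unfolding e by simp
    moreover have "(d + u) - d = u" by simp
    ultimately have "A u = 0" using coef[of "d+u"] u by simp
    then show False using A_nz u by auto
  qed
  have Wpos: "\<And>u. u\<in>W \<Longrightarrow> l0 \<bullet> cb < l0 \<bullet> ((1/2) *\<^sub>R (d + u))"
  proof -
    fix u assume u: "u \<in> W"
    obtain a b where ab: "a \<in> C" "b \<in> C" "a + b = d + u" using mid[OF u] by blast
    have ne: "\<not> (a = cb \<and> b = cb)"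
    proof
      assume "a = cb \<and> b = cb"
      then have "(1/2) *\<^sub>R (d + u) = cb" using ab(3)[symmetric] by (simp add: scaleR_2[symmetric])
      then show False using Wb_hull[OF u] by simp
    qed
    have "l0 \<bullet> cb \<le> l0 \<bullet> a" "l0 \<bullet> cb \<le> l0 \<bullet> b" using l0 ab by (metis order_refl less_imp_le)+
    moreover have "l0 \<bullet> cb < l0 \<bullet> a \<or> l0 \<bullet> cb < l0 \<bullet> b" using l0 ab ne by blast
    moreover have e: "l0 \<bullet> ((1/2) *\<^sub>R (d + u)) = (l0 \<bullet> a + l0 \<bullet> b)/2"
      using ab(3)[symmetric] by (simp add: inner_add_right)
    ultimately show "l0 \<bullet> cb < l0 \<bullet> ((1/2) *\<^sub>R (d + u))" unfolding e by argo
  qed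
  have "convex hull {v,w} exposed_face_of convex hull W"
    using exposed_face_of_polyhedron[OF polyhedron_convex_hull[OF W_fin]] vw_edge by blast
  then obtain ae be where ae1: "convex hull W \<subseteq> {x. ae \<bullet> x \<le> be}"
    and ae2: "convex hull {v,w} = convex hull W \<inter> {x. ae \<bullet> x = be}"
    unfolding exposed_face_of_def by blast
  have aeW: "\<And>u. u\<in>W \<Longrightarrow> ae \<bullet> u \<le> be" using ae1 hull_inc by fastforce
  have aev: "ae \<bullet> v = be" "ae \<bullet> w = be" using ae2 hull_inc[of v "{v,w}"] hull_inc[of w "{v,w}"] by auto
  have aeeq: "\<And>u. u\<in>W \<Longrightarrow> ae \<bullet> u = be \<Longrightarrow> u = v \<or> u = w"
  proof -
    fix u assume u: "u \<in> W" "ae \<bullet> u = be"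
    then have "u \<in> convex hull {v,w}" using ae2 hull_inc[of u W] by auto
    then have "u \<in> closed_segment v w" by (simp add: segment_convex_hull)
    moreover have "u \<notin> open_segment v w" using vw_empty u by auto
    ultimately show "u = v \<or> u = w" unfolding open_segment_def by auto
  qed
  define lp where "lp = (-2) *\<^sub>R ae"
  define kp where "kp = be + ae \<bullet> d"
  have phiW: "\<And>u. lp \<bullet> ((1/2) *\<^sub>R (d + u)) + kp = be - ae \<bullet> u"
    unfolding lp_def kp_def by (simp add: inner_add_right field_simps)
  have c2: "2 *\<^sub>R cb = d + 2 *\<^sub>R v - w" using c_eq by (simp add: algebra_simps)
  have phicb: "lp \<bullet> cb + kp = 0"
  proof -
    have "lp \<bullet> cb = - (ae \<bullet> (2 *\<^sub>R cb))" unfolding lp_def by simp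
    also have "\<dots> = - (ae \<bullet> d) - 2 * (ae \<bullet> v) + ae \<bullet> w" unfolding c2 by (simp add: inner_add_right inner_diff_right)
    finally show ?thesis unfolding kp_def using aev by simp
  qed
  have sw: "\<And>l k x. (\<And>u. u\<in>W \<Longrightarrow> l \<bullet> ((1/2) *\<^sub>R (d + u)) + k \<ge> 0) \<Longrightarrow> l \<bullet> cb + k = 0 \<Longrightarrow> x \<in> C \<Longrightarrow> l \<bullet> x + k \<ge> 0"
    using sweep[OF dpos dn fin H Fnz coef cbC l0 Wpos] by blast
  have phiC: "\<And>x. x \<in> C \<Longrightarrow> lp \<bullet> x + kp \<ge> 0"
    using sw[of lp kp] phiW aeW phicb by simp
  define vb where "vb = (1/2) *\<^sub>R (d + v)"
  define wb where "wb = (1/2) *\<^sub>R (d + w)"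
  define \<delta> where "\<delta> = vb - cb"
  have cbvw: "cb = 2 *\<^sub>R vb - wb"
  proof -
    have "cb = (1/2) *\<^sub>R (2 *\<^sub>R cb)" by simp
    also have "\<dots> = (1/2) *\<^sub>R (d + 2 *\<^sub>R v - w)" using c2 by simp
    also have "\<dots> = 2 *\<^sub>R vb - wb" unfolding vb_def wb_def by (simp add: vec_eq_iff field_simps)
    finally show ?thesis .
  qed
  have d1: "\<delta> = wb - vb" unfolding \<delta>_def cbvw by (simp add: vec_eq_iff)
  have wbP: "wb = cb + 2 *\<^sub>R \<delta>" unfolding d1 cbvw by (simp add: vec_eq_iff)
  have vbW: "vb \<noteq> cb" using Wb_hull[OF vW] unfolding vb_def by simp
  have dnz: "\<delta> \<noteq> 0" using vbW unfolding \<delta>_def by simp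
  have dd: "\<delta> \<bullet> \<delta> > 0" using dnz by simp
  have phivb: "lp \<bullet> vb + kp = 0" using phiW[of v] aev unfolding vb_def by simp
  have lpd: "lp \<bullet> \<delta> = 0" using phivb phicb unfolding \<delta>_def by (simp add: inner_diff_right)
  have l0d: "l0 \<bullet> \<delta> > 0" using Wpos[OF vW] unfolding \<delta>_def vb_def by (simp add: inner_diff_right)
  define P where "P t = cb + t *\<^sub>R \<delta>" for t
  have phiP: "\<And>t. lp \<bullet> P t + kp = 0" unfolding P_def using phicb lpd by (simp add: inner_add_right)
  have Pinj: "inj P" unfolding P_def inj_def using dnz by auto
  have P0: "P 0 = cb" "P 1 = vb" "P 2 = wb" unfolding P_def using wbP \<delta>_def by auto
  have orth: "\<And>lw z. lw \<bullet> \<delta> = 0 \<Longrightarrow> z \<in> C \<Longrightarrow> lp \<bullet> z + kp = 0 \<Longrightarrow> lw \<bullet> (z - cb) \<ge> 0"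
  proof -
    fix lw z assume lw: "lw \<bullet> \<delta> = 0" and zC: "z \<in> C" and zphi: "lp \<bullet> z + kp = 0"
    define psi where "psi x = lw \<bullet> x - lw \<bullet> cb" for x
    define M where "M = (\<Sum>u\<in>W. \<bar>psi ((1/2) *\<^sub>R (d + u))\<bar> / (be - ae \<bullet> u))"
    have psiP: "\<And>t. psi (P t) = 0" unfolding psi_def P_def using lw by (simp add: inner_add_right)
    have key: "(lw + M *\<^sub>R lp) \<bullet> z + (-(lw \<bullet> cb) + M * kp) \<ge> 0"
    proof (rule sw)
      fix u assume u: "u \<in> W"
      let ?u = "(1/2) *\<^sub>R (d + u)"
      have e: "(lw + M *\<^sub>R lp) \<bullet> ?u + (-(lw \<bullet> cb) + M * kp) = psi ?u + M * (lp \<bullet> ?u + kp)"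
        unfolding psi_def by (simp add: inner_add_left algebra_simps)
      also have "\<dots> = psi ?u + M * (be - ae \<bullet> u)" using phiW[of u] by simp
      finally have e2: "(lw + M *\<^sub>R lp) \<bullet> ?u + (-(lw \<bullet> cb) + M * kp) = psi ?u + M * (be - ae \<bullet> u)" .
      show "(lw + M *\<^sub>R lp) \<bullet> ?u + (-(lw \<bullet> cb) + M * kp) \<ge> 0"
      proof (cases "ae \<bullet> u = be")
        case True
        then have "u = v \<or> u = w" using aeeq u by blast
        then have "?u = P 1 \<or> ?u = P 2" using P0 unfolding vb_def wb_def by auto
        then have "psi ?u = 0" using psiP by auto
        then show ?thesis unfolding e2 using True by simp
      next
        case False
        then have pos: "be - ae \<bullet> u > 0" using aeW[OF u] by simp
        have "\<bar>psi ?u\<bar> / (be - ae \<bullet> u) \<le> M" unfolding M_def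
          by (rule member_le_sum) (use u aeW W_fin in auto)
        then have "\<bar>psi ?u\<bar> \<le> M * (be - ae \<bullet> u)" using pos by (simp add: divide_le_eq)
        then show ?thesis unfolding e2 by linarith
      qed
    next
      show "(lw + M *\<^sub>R lp) \<bullet> cb + (-(lw \<bullet> cb) + M * kp) = 0"
      proof -
        have "(lw + M *\<^sub>R lp) \<bullet> cb + (-(lw \<bullet> cb) + M * kp) = M * (lp \<bullet> cb + kp)"
          by (simp add: inner_add_left algebra_simps)
        then show ?thesis using phicb by simp
      qed
    next
      show "z \<in> C" by (rule zC)
    qed
    have "(lw + M *\<^sub>R lp) \<bullet> z + (-(lw \<bullet> cb) + M * kp) = lw \<bullet> (z - cb) + M * (lp \<bullet> z + kp)"
      by (simp add: inner_add_left inner_diff_right algebra_simps)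
    then show "lw \<bullet> (z - cb) \<ge> 0" using key zphi by simp
  qed
  have Zline: "\<And>z. z \<in> C \<Longrightarrow> lp \<bullet> z + kp = 0 \<Longrightarrow> z = P (((z - cb) \<bullet> \<delta>) / (\<delta> \<bullet> \<delta>))"
  proof -
    fix z assume zC: "z \<in> C" and zphi: "lp \<bullet> z + kp = 0"
    define y where "y = z - cb"
    define c1 where "c1 = (y \<bullet> \<delta>) / (\<delta> \<bullet> \<delta>)"
    define lv where "lv = y - c1 *\<^sub>R \<delta>"
    have lvd: "lv \<bullet> \<delta> = 0" unfolding lv_def c1_def using dd by (simp add: inner_diff_left)
    have a1: "lv \<bullet> y \<ge> 0" using orth[OF lvd zC zphi] unfolding y_def .
    have lvd2: "(- lv) \<bullet> \<delta> = 0" using lvd by simp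
    have a2: "(- lv) \<bullet> y \<ge> 0" using orth[OF lvd2 zC zphi] unfolding y_def .
    have ly: "lv \<bullet> y = 0" using a1 a2 by simp
    have "lv \<bullet> (y - c1 *\<^sub>R \<delta>) = lv \<bullet> y - c1 * (lv \<bullet> \<delta>)" by (simp add: inner_diff_right)
    moreover have "y - c1 *\<^sub>R \<delta> = lv" by (simp add: lv_def)
    ultimately have "lv \<bullet> lv = 0" using ly lvd by simp
    then have "lv = 0" by simp
    then have "z = cb + c1 *\<^sub>R \<delta>" unfolding lv_def y_def by (simp add: algebra_simps)
    then show "z = P (((z - cb) \<bullet> \<delta>) / (\<delta> \<bullet> \<delta>))" unfolding P_def c1_def y_def by simp
  qed
  define T where "T = {t. P t \<in> C}"
  have finT: "finite T" unfolding T_def using finite_vimageI[OF fin Pinj] by (simp add: vimage_def)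
  have T0: "0 \<in> T" unfolding T_def using P0 cbC by simp
  have Tnn: "\<And>t. t \<in> T \<Longrightarrow> t \<ge> 0"
  proof (rule ccontr)
    fix t assume tT: "t \<in> T" and nt: "\<not> t \<ge> 0"
    then have "P t \<noteq> cb" using Pinj P0(1) by (metis inj_eq order_refl)
    then have "l0 \<bullet> cb < l0 \<bullet> P t" using l0 tT unfolding T_def by auto
    then have "t * (l0 \<bullet> \<delta>) > 0" unfolding P_def by (simp add: inner_add_right)
    then show False using nt l0d by (simp add: zero_less_mult_iff)
  qed
  define Q where "Q s = 2 *\<^sub>R cb + s *\<^sub>R \<delta>" for s
  have PQ: "\<And>a b. P a + P b = Q (a + b)" unfolding P_def Q_def by (simp add: vec_eq_iff algebra_simps)
  have Qinj: "\<And>a b. Q a = Q b \<Longrightarrow> a = b" unfolding Q_def using dnz by simp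
  have pairs: "\<And>x y s. x \<in> C \<Longrightarrow> y \<in> C \<Longrightarrow> x + y = Q s \<Longrightarrow> \<exists>a b. a \<in> T \<and> b \<in> T \<and> x = P a \<and> y = P b \<and> a + b = s"
  proof -
    fix x y s assume x: "x \<in> C" and y: "y \<in> C" and e: "x + y = Q s"
    have "(lp \<bullet> x + kp) + (lp \<bullet> y + kp) = lp \<bullet> (x + y) + 2 * kp" by (simp add: inner_add_right)
    also have "\<dots> = 2 * (lp \<bullet> cb + kp) + s * (lp \<bullet> \<delta>)" unfolding e Q_def by (simp add: inner_add_right algebra_simps)
    also have "\<dots> = 0" using phicb lpd by simp
    finally have "(lp \<bullet> x + kp) + (lp \<bullet> y + kp) = 0" .
    then have zx: "lp \<bullet> x + kp = 0" and zy: "lp \<bullet> y + kp = 0" using phiC[OF x] phiC[OF y] by linarith+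
    obtain a where a: "x = P a" using Zline[OF x zx] by blast
    obtain b where b: "y = P b" using Zline[OF y zy] by blast
    have "Q (a + b) = Q s" using e a b PQ by simp
    then have "a + b = s" using Qinj by blast
    moreover have "a \<in> T" "b \<in> T" using x y a b unfolding T_def by auto
    ultimately show "\<exists>a b. a \<in> T \<and> b \<in> T \<and> x = P a \<and> y = P b \<and> a + b = s" using a b by blast
  qed
  define g where "g a b = Jform d (P a) (P b) * F (P a) * F (P b)" for a b
  have cfT: "\<And>s. (\<Sum>(a,b)\<in>{(a,b)\<in>T\<times>T. a+b=s}. g a b) = (if Q s - d \<in> W then A (Q s - d) else 0)"
  proof -
    fix s
    have "(\<Sum>(x,y)\<in>{(x,y)\<in>C\<times>C. x+y=Q s}. Jform d x y * F x * F y) = (\<Sum>(a,b)\<in>{(a,b)\<in>T\<times>T. a+b=s}. g a b)"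
    proof (rule sum.reindex_cong[where l = "\<lambda>(a,b). (P a, P b)"])
      show "inj_on (\<lambda>(a,b). (P a, P b)) {(a,b)\<in>T\<times>T. a+b=s}"
        using Pinj by (auto simp: inj_on_def inj_def)
      show "{(x,y)\<in>C\<times>C. x+y=Q s} = (\<lambda>(a,b). (P a, P b)) ` {(a,b)\<in>T\<times>T. a+b=s}"
      proof (intro equalityI subsetI)
        fix z assume "z \<in> {(x,y)\<in>C\<times>C. x+y=Q s}"
        then obtain x y where z: "z = (x,y)" "x \<in> C" "y \<in> C" "x + y = Q s" by auto
        then obtain a b where ab: "a \<in> T" "b \<in> T" "x = P a" "y = P b" "a + b = s" using pairs by blast
        then show "z \<in> (\<lambda>(a,b). (P a, P b)) ` {(a,b)\<in>T\<times>T. a+b=s}"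
          using z by (auto intro!: image_eqI[where x="(a,b)"])
      next
        fix z assume "z \<in> (\<lambda>(a,b). (P a, P b)) ` {(a,b)\<in>T\<times>T. a+b=s}"
        then obtain a b where "z = (P a, P b)" "a \<in> T" "b \<in> T" "a + b = s" by auto
        then show "z \<in> {(x,y)\<in>C\<times>C. x+y=Q s}" using PQ unfolding T_def by auto
      qed
      show "\<And>x. x \<in> {(a,b)\<in>T\<times>T. a+b=s} \<Longrightarrow> (\<lambda>(x,y). Jform d x y * F x * F y) ((\<lambda>(a,b). (P a, P b)) x) = (\<lambda>(a,b). g a b) x"
        by (auto simp: g_def)
    qed
    then show "(\<Sum>(a,b)\<in>{(a,b)\<in>T\<times>T. a+b=s}. g a b) = (if Q s - d \<in> W then A (Q s - d) else 0)"
      using coef[of "Q s"] by simp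
  qed
  define \<beta> where "\<beta> = Jform d cb \<delta>"
  define \<gamma> where "\<gamma> = Jform d \<delta> \<delta>"
  have Jl: "\<And>a b. Jform d (P a) (P b) = (a + b) * \<beta> + a * b * \<gamma>"
    unfolding P_def \<beta>_def \<gamma>_def using cb_null
    by (simp add: Jform_add_left Jform_add_right Jform_scale_left Jform_scale_right Jform_sym[of d \<delta> cb] algebra_simps)
  have xibP: "\<exists>t. xib = P t"
  proof -
    from vw_coll obtain u0 where u0: "\<forall>x\<in>{2 *\<^sub>R cb - d, 2 *\<^sub>R xib - d, v, w}. \<forall>y\<in>{2 *\<^sub>R cb - d, 2 *\<^sub>R xib - d, v, w}. \<exists>c. x - y = c *\<^sub>R u0"
      unfolding collinear_def by blast
    obtain c1 where c1: "(2 *\<^sub>R xib - d) - v = c1 *\<^sub>R u0" using u0 by blast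
    obtain c2 where c2: "w - v = c2 *\<^sub>R u0" using u0 by blast
    have c2nz: "c2 \<noteq> 0" using c2 vw by auto
    define s where "s = c1 / c2"
    have "(2 *\<^sub>R xib - d) - v = s *\<^sub>R (w - v)" unfolding s_def c2 c1 using c2nz by simp
    then have e: "\<And>i. 2 * xib$i - d$i - v$i = s * (w$i - v$i)"
      by (metis vector_minus_component vector_scaleR_component real_scaleR_def)
    have "xib = P (1 + s)"
      unfolding P_def \<delta>_def
    proof (simp add: vec_eq_iff, intro allI)
      fix i
      have dv: "vb$i - cb$i = wb$i - vb$i" using d1 unfolding \<delta>_def by (metis vector_minus_component)
      have "cb$i + (1 + s) * (vb$i - cb$i) = vb$i + s * (wb$i - vb$i)" using dv by (simp add: algebra_simps)
      moreover have "vb$i + s * (wb$i - vb$i) = xib$i" unfolding vb_def wb_def using e[of i]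
        by (simp add: field_simps)
      ultimately show "xib$i = cb$i + (1 + s) * (vb$i - cb$i)" by simp
    qed
    then show ?thesis by blast
  qed
  have bnz: "\<beta> \<noteq> 0"
  proof
    assume b0: "\<beta> = 0"
    obtain t where t: "xib = P t" using xibP by blast
    have "Jform d cb xib = Jform d (P 0) (P t)" using t P0 by simp
    also have "\<dots> = 0" using Jl b0 by simp
    finally show False using xib_J by simp
  qed
  have Qv: "Q 2 - d = v"
  proof -
    have "Q 2 = P 1 + P 1" using PQ by simp
    moreover have "vb + vb = d + v" unfolding vb_def by (simp add: vec_eq_iff)
    ultimately show ?thesis using P0 by simp
  qed
  have Qw: "Q 4 - d = w"
  proof -
    have "Q 4 = P 2 + P 2" using PQ by simp
    moreover have "wb + wb = d + w" unfolding wb_def by (simp add: vec_eq_iff)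
    ultimately show ?thesis using P0 by simp
  qed
  have QW: "\<And>s. Q s - d \<in> W \<Longrightarrow> s = 2 \<or> s = 4"
  proof -
    fix s assume u: "Q s - d \<in> W"
    have hq: "(1/2) *\<^sub>R (d + (Q s - d)) = P (s/2)" unfolding P_def Q_def by (simp add: vec_eq_iff)
    have "be - ae \<bullet> (Q s - d) = lp \<bullet> ((1/2) *\<^sub>R (d + (Q s - d))) + kp" using phiW[of "Q s - d"] by simp
    also have "\<dots> = 0" unfolding hq by (rule phiP)
    finally have "be - ae \<bullet> (Q s - d) = 0" .
    then have "Q s - d = v \<or> Q s - d = w" using aeeq[OF u] by simp
    then have "Q s = Q 2 \<or> Q s = Q 4" using Qv Qw by (metis diff_add_cancel)
    then show "s = 2 \<or> s = 4" using Qinj by blast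
  qed
  have FT: "\<And>t. t \<in> T \<Longrightarrow> F (P t) \<noteq> 0" using Fnz unfolding T_def by auto
  have Av: "A v \<noteq> 0" using A_nz vW by auto
  have cf2: "(\<Sum>(a,b)\<in>{(a,b)\<in>T\<times>T. a+b=2}. g a b) = A v" using cfT[of 2] Qv vW by simp
  have pos_ex: "\<exists>t\<in>T. t > 0"
  proof (rule ccontr)
    assume "\<not> (\<exists>t\<in>T. t > 0)"
    then have "\<forall>t\<in>T. t = 0" using Tnn by force
    then have all0: "\<forall>t\<in>T. t = 0" .
    have e0: "{(a,b)\<in>T\<times>T. a+b=(2::real)} = {}"
    proof -
      { fix a b assume ab: "a \<in> T" "b \<in> T" "a + b = (2::real)"
        have "a = 0" "b = 0" using all0 ab(1,2) by auto
        then have False using ab(3) by simp }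
      then show ?thesis by auto
    qed
    show False using cf2[unfolded e0] Av by simp
  qed
  define T1 where "T1 = {t\<in>T. t > 0}"
  have finT1: "finite T1" using finT unfolding T1_def by simp
  have neT1: "T1 \<noteq> {}" using pos_ex unfolding T1_def by auto
  obtain t1 where t1T1: "t1 \<in> T1" and t1min: "\<forall>y\<in>T1. t1 \<le> y"
    using fin_argmin[OF finT1 neT1, of "\<lambda>x. x"] by blast
  have t1T: "t1 \<in> T" and t1pos: "t1 > 0" using t1T1 unfolding T1_def by auto
  have Tge: "\<And>t. t \<in> T \<Longrightarrow> t = 0 \<or> t \<ge> t1"
  proof -
    fix t assume tT: "t \<in> T"
    show "t = 0 \<or> t \<ge> t1"
    proof (cases "t = 0")
      case False
      then have "t \<in> T1" using Tnn[OF tT] tT unfolding T1_def by simp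
      then show ?thesis using t1min by blast
    qed simp
  qed
  have S1: "{(a,b)\<in>T\<times>T. a+b=t1} = {(0,t1),(t1,0)}"
  proof (intro equalityI subsetI)
    fix z assume "z \<in> {(a,b)\<in>T\<times>T. a+b=t1}"
    then obtain a b where z: "z = (a,b)" "a \<in> T" "b \<in> T" "a + b = t1" by auto
    show "z \<in> {(0,t1),(t1,0)}"
    proof (cases "a = 0 \<or> b = 0")
      case True then show ?thesis using z by auto
    next
      case False
      then have "a \<ge> t1" "b \<ge> t1" using Tge z by auto
      then show ?thesis using z t1pos by linarith
    qed
  next
    fix z assume "z \<in> {(0,t1),(t1,0)}"
    then show "z \<in> {(a,b)\<in>T\<times>T. a+b=t1}" using T0 t1T by auto
  qed
  have "(\<Sum>(a,b)\<in>{(a,b)\<in>T\<times>T. a+b=t1}. g a b) = g 0 t1 + g t1 0"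
    unfolding S1 using t1pos by simp
  also have "\<dots> = 2 * (t1 * \<beta> * F (P 0) * F (P t1))" unfolding g_def Jl by (simp add: algebra_simps)
  finally have s1: "(\<Sum>(a,b)\<in>{(a,b)\<in>T\<times>T. a+b=t1}. g a b) = 2 * (t1 * \<beta> * F (P 0) * F (P t1))" .
  have "2 * (t1 * \<beta> * F (P 0) * F (P t1)) \<noteq> 0" using t1pos bnz FT[OF T0] FT[OF t1T] by simp
  then have "Q t1 - d \<in> W" using s1 cfT[of t1] by (auto split: if_splits)
  then have "t1 = 2 \<or> t1 = 4" by (rule QW)
  then have t1ge: "t1 \<ge> 2" by auto
  obtain tm where tmT: "tm \<in> T" and tmmax: "\<forall>y\<in>T. y \<le> tm"
    using fin_argmax[OF finT, of "\<lambda>x. x"] T0 by blast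
  have "t1 \<le> tm" using tmmax t1T by blast
  then have tm2: "tm \<ge> 2" using t1ge by linarith
  have Sm: "{(a,b)\<in>T\<times>T. a+b=2*tm} = {(tm,tm)}"
  proof (intro equalityI subsetI)
    fix z assume "z \<in> {(a,b)\<in>T\<times>T. a+b=2*tm}"
    then obtain a b where z: "z = (a,b)" "a \<in> T" "b \<in> T" "a + b = 2*tm" by auto
    then have "a \<le> tm" "b \<le> tm" using tmmax by auto
    then show "z \<in> {(tm,tm)}" using z by auto
  next
    fix z assume "z \<in> {(tm,tm)}"
    then show "z \<in> {(a,b)\<in>T\<times>T. a+b=2*tm}" using tmT by auto
  qed
  have cfm: "g tm tm = (if Q (2*tm) - d \<in> W then A (Q (2*tm) - d) else 0)"
    using cfT[of "2*tm"] unfolding Sm by simp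
  have tmeq: "tm = 2"
  proof (rule ccontr)
    assume ne: "tm \<noteq> 2"
    then have tmgt: "tm > 2" using tm2 by simp
    have "Q (2*tm) - d \<notin> W"
    proof
      assume "Q (2*tm) - d \<in> W"
      then have "2*tm = 2 \<or> 2*tm = 4" using QW by blast
      then show False using tmgt by auto
    qed
    then have "g tm tm = 0" using cfm by simp
    then have "Jform d (P tm) (P tm) = 0" using FT[OF tmT] unfolding g_def by simp
    then have "tm * (2 * \<beta> + tm * \<gamma>) = 0" unfolding Jl by (simp add: algebra_simps)
    then have tmg: "tm * \<gamma> = - 2 * \<beta>" using tmgt by simp
    have neTm: "T - {tm} \<noteq> {}" using T0 tmgt by auto
    obtain tp where tpT: "tp \<in> T - {tm}" and tpmax: "\<forall>y\<in>T - {tm}. y \<le> tp"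
      using fin_argmax[OF _ neTm, of "\<lambda>x. x"] finT by blast
    have tpT': "tp \<in> T" and tpne: "tp \<noteq> tm" using tpT by auto
    have "tp \<le> tm" using tmmax tpT' by blast
    then have tplt: "tp < tm" using tpne by linarith
    have tpnn: "tp \<ge> 0" using Tnn tpT' by simp
    have Sp: "{(a,b)\<in>T\<times>T. a+b=tm+tp} = {(tm,tp),(tp,tm)}"
    proof (intro equalityI subsetI)
      fix z assume "z \<in> {(a,b)\<in>T\<times>T. a+b=tm+tp}"
      then obtain a b where z: "z = (a,b)" "a \<in> T" "b \<in> T" "a + b = tm+tp" by auto
      show "z \<in> {(tm,tp),(tp,tm)}"
      proof (cases "a = tm \<or> b = tm")
        case True then show ?thesis using z by auto
      next
        case False
        then have "a \<le> tp" "b \<le> tp" using tpmax z by auto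
        then show ?thesis using z tplt by linarith
      qed
    next
      fix z assume "z \<in> {(tm,tp),(tp,tm)}"
      then show "z \<in> {(a,b)\<in>T\<times>T. a+b=tm+tp}" using tmT tpT' by auto
    qed
    have Jmp: "Jform d (P tm) (P tp) = \<beta> * (tm - tp)"
    proof -
      have "Jform d (P tm) (P tp) = (tm + tp) * \<beta> + tp * (tm * \<gamma>)" unfolding Jl by (simp add: algebra_simps)
      also have "\<dots> = \<beta> * (tm - tp)" unfolding tmg by (simp add: algebra_simps)
      finally show ?thesis .
    qed
    have "(\<Sum>(a,b)\<in>{(a,b)\<in>T\<times>T. a+b=tm+tp}. g a b) = g tm tp + g tp tm"
      unfolding Sp using tpne by simp
    also have "\<dots> = 2 * (\<beta> * (tm - tp) * F (P tm) * F (P tp))"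
      unfolding g_def Jmp Jform_sym[of d "P tp" "P tm"] by (simp add: algebra_simps)
    finally have sp: "(\<Sum>(a,b)\<in>{(a,b)\<in>T\<times>T. a+b=tm+tp}. g a b) = 2 * (\<beta> * (tm - tp) * F (P tm) * F (P tp))" .
    have "2 * (\<beta> * (tm - tp) * F (P tm) * F (P tp)) \<noteq> 0" using bnz tplt FT[OF tmT] FT[OF tpT'] by simp
    then have "Q (tm+tp) - d \<in> W" using sp cfT[of "tm+tp"] by (auto split: if_splits)
    then have "tm + tp = 2 \<or> tm + tp = 4" using QW by blast
    then have s4: "tm + tp = 4" using tmgt tpnn by auto
    have tp0: "tp = 0"
    proof (rule ccontr)
      assume "tp \<noteq> 0"
      then have "tp \<ge> t1" using Tge tpT' by blast
      then show False using s4 tmgt t1ge by linarith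
    qed
    have Tin: "\<And>t. t \<in> T \<Longrightarrow> t = 0 \<or> t = 4"
    proof -
      fix t assume tT: "t \<in> T"
      show "t = 0 \<or> t = 4"
      proof (cases "t = tm")
        case True then show ?thesis using s4 tp0 by simp
      next
        case False then have "t \<le> tp" using tpmax tT by auto
        then show ?thesis using Tnn[OF tT] tp0 by simp
      qed
    qed
    have e0: "{(a,b)\<in>T\<times>T. a+b=(2::real)} = {}"
    proof -
      { fix a b assume "a \<in> T" "b \<in> T" "a + b = (2::real)"
        then have False using Tin[of a] Tin[of b] by auto }
      then show ?thesis by auto
    qed
    show False using cf2[unfolded e0] Av by simp
  qed
  have gw: "g 2 2 = A w" using cfm Qw wW unfolding tmeq by simp
  have Jw: "Jform d wb wb * F wb * F wb = A w" using gw P0 unfolding g_def by simp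
  show ?thesis
  proof (cases "\<exists>i. v$i = -1 \<and> w$i = -2")
    case True
    then obtain i where "v$i = -1" "w$i = -2" by blast
    then have "type_III w" using type_m2 W_types wW by blast
    then show ?thesis using True by blast
  next
    case False
    have tv: "type_I v \<or> type_II v \<or> type_III v" and tw: "type_I w \<or> type_II w \<or> type_III w"
      using W_types vW wW by auto
    have vscb: "vsum cb = (vsum d - 1)/2" using H cbC by auto
    have vswb: "vsum wb = (vsum d - 1)/2" unfolding wb_def using vsum_types[OF tw] by simp
    have eqv: "vsum wb = vsum cb" using vscb vswb by simp
    have e1: "Jform d wb wb = vsum cb * vsum cb / (vsum d - 1) - Nf d wb wb"
      unfolding Jform_Nf eqv ..
    have e2: "Jform d cb cb = vsum cb * vsum cb / (vsum d - 1) - Nf d cb cb"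
      unfolding Jform_Nf ..
    have J1: "Jform d wb wb = Nf d cb cb - Nf d wb wb"
      using e1 e2 cb_null by linarith
    have cbi: "\<And>i. cb$i = (d$i + 2 * v$i - w$i) / 2"
    proof -
      fix i
      have "(2 *\<^sub>R cb)$i = (d + 2 *\<^sub>R v - w)$i" using c2 by simp
      then show "cb$i = (d$i + 2 * v$i - w$i) / 2" by simp
    qed
    have "Nf d cb cb - Nf d wb wb = (\<Sum>i\<in>UNIV. (v$i - w$i) + v$i * (v$i - w$i) / d$i)"
      unfolding Nf_def sum_subtractf[symmetric]
    proof (rule sum.cong)
      fix i :: 'n
      have dp: "d$i > 0" using dpos by simp
      show "cb$i * cb$i / d$i - wb$i * wb$i / d$i = (v$i - w$i) + v$i * (v$i - w$i) / d$i"
        unfolding cbi wb_def using dp by (simp add: field_simps)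
    qed simp
    also have "\<dots> = (vsum v - vsum w) + (\<Sum>i\<in>UNIV. v$i * (v$i - w$i) / d$i)"
      unfolding vsum_def by (simp add: sum.distrib sum_subtractf)
    also have "vsum v - vsum w = 0" using vsum_types[OF tv] vsum_types[OF tw] by simp
    finally have J2: "Nf d cb cb - Nf d wb wb = (\<Sum>i\<in>UNIV. v$i * (v$i - w$i) / d$i)" by simp
    have "(\<Sum>i\<in>UNIV. v$i * (v$i - w$i) / d$i) \<ge> 0"
    proof (rule sum_nonneg)
      fix i :: 'n
      have "v$i * (v$i - w$i) \<ge> 0"
        using term_sign[OF type_entries[OF tv] type_entries[OF tw]] False by blast
      then show "v$i * (v$i - w$i) / d$i \<ge> 0" using dpos by (simp add: less_imp_le divide_nonneg_pos)
    qed
    then have "Jform d wb wb \<ge> 0" using J1 J2 by simp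
    then have "A w \<ge> 0" using Jw by (metis mult_nonneg_nonneg mult.assoc zero_le_square)
    then have "type_I w" using A_other wW by force
    then show ?thesis by blast
  qed
qed

end
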